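(* Let $X$ be a nonempty set and $d$ a triangular symmetric on $X$ such that $(X,d)$ is 0-complete. Let $T:X\to X$, $G\in\{M_1,M_2\}$, and suppose $d(Tx,Ty)\le\varphi(G(x,y))$ for all $x,y\in X$, for some nearly right admissible asymptotic normal function $\varphi:[0,\infty)\to[0,\infty)$. Then $T$ is a global Picard operator (modulo $d$).
   Context: A symmetric on $X$ is a map $d:X\times X\to[0,\infty)$ with $d(x,y)=d(y,x)$; it is triangular if $d(x,z)\le d(x,y)+d(y,z)$ for all $x,y,z$. A sequence $(x_n)$ $0d$-converges to $x$ if $d(x_n,x)\to0$; it is $0d$-convergent if such $x$ exists; it is $0d$-Cauchy if for every $\varepsilon>0$ there is $j$ with $d(x_m,x_n)<\varepsilon$ whenever $j\le m<n$. $(X,d)$ is 0-complete if every $0d$-Cauchy sequence is $0d$-convergent. A nonempty $Y\subseteq X$ is $d$-singleton if $d(y_1,y_2)=0$ for all $y_1,y_2\in Y$. $\mathrm{Fix}(T;d)=\{z: d(z,Tz)=0\}$. $T$ is a global Picard operator (modulo $d$) if for every $x\in X$ the sequence $(T^nx)$ is $0d$-convergent and every point to which it $0d$-converges lies in $\mathrm{Fix}(T;d)$, and moreover $\mathrm{Fix}(T;d)$ is $d$-singleton. Notation: $M_1(x,y)=d(x,y)$, $H(x,y)=\max\{d(x,Tx),d(y,Ty)\}$, $M_2=\max\{M_1,H\}$. $\varphi$ is normal if $\varphi(0)=0$ and $\varphi(t)<t$ for $t>0$; asymptotic normal if normal and every sequence $(r_n)$ in $[0,\infty)$ with $r_{n+1}\le\varphi(r_n)$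 for all $n$ tends to $0$; nearly right admissible if normal and there is a countable $Q\subseteq(0,\infty)$ with $\max\{\limsup_{t\to s+}\varphi(t),\varphi(s)\}<s$ for all $s\in(0,\infty)\setminus Q$. *)

theory Defs
  imports "HOL-Analysis.Analysis"
begin

definition symmetric_on :: "'a set \<Rightarrow> ('a \<Rightarrow> 'a \<Rightarrow> real) \<Rightarrow> bool" where
  "symmetric_on X d \<longleftrightarrow> (\<forall>x\<in>X. \<forall>y\<in>X. d x y \<ge> 0 \<and> d x y = d y x)"

definition triangular_on :: "'a set \<Rightarrow> ('a \<Rightarrow> 'a \<Rightarrow> real) \<Rightarrow> bool" where
  "triangular_on X d \<longleftrightarrow> (\<forall>x\<in>X. \<forall>y\<in>X. \<forall>z\<in>X. d x z \<le> d x y + d y z)"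

definition zd_converges :: "('a \<Rightarrow> 'a \<Rightarrow> real) \<Rightarrow> (nat \<Rightarrow> 'a) \<Rightarrow> 'a \<Rightarrow> bool" where
  "zd_converges d s x \<longleftrightarrow> ((\<lambda>n. d (s n) x) \<longlonglongrightarrow> 0)"

definition zd_convergent :: "'a set \<Rightarrow> ('a \<Rightarrow> 'a \<Rightarrow> real) \<Rightarrow> (nat \<Rightarrow> 'a) \<Rightarrow> bool" where
  "zd_convergent X d s \<longleftrightarrow> (\<exists>x\<in>X. zd_converges d s x)"

definition zd_Cauchy :: "('a \<Rightarrow> 'a \<Rightarrow> real) \<Rightarrow> (nat \<Rightarrow> 'a) \<Rightarrow> bool" where
  "zd_Cauchy d s \<longleftrightarrow> (\<forall>e>0. \<exists>j. \<forall>m n. j \<le> m \<and> m < n \<longrightarrow> d (s m) (s n) < e)"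

definition zero_complete :: "'a set \<Rightarrow> ('a \<Rightarrow> 'a \<Rightarrow> real) \<Rightarrow> bool" where
  "zero_complete X d \<longleftrightarrow>
     (\<forall>s. (\<forall>n. s n \<in> X) \<longrightarrow> zd_Cauchy d s \<longrightarrow> zd_convergent X d s)"

definition d_singleton :: "('a \<Rightarrow> 'a \<Rightarrow> real) \<Rightarrow> 'a set \<Rightarrow> bool" where
  "d_singleton d Y \<longleftrightarrow> Y \<noteq> {} \<and> (\<forall>y1\<in>Y. \<forall>y2\<in>Y. d y1 y2 = 0)"

definition Fix_d :: "'a set \<Rightarrow> ('a \<Rightarrow> 'a) \<Rightarrow> ('a \<Rightarrow> 'a \<Rightarrow> real) \<Rightarrow> 'a set" where
  "Fix_d X T d = {z\<in>X. d z (T z) = 0}"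

definition global_Picard :: "'a set \<Rightarrow> ('a \<Rightarrow> 'a \<Rightarrow> real) \<Rightarrow> ('a \<Rightarrow> 'a) \<Rightarrow> bool" where
  "global_Picard X d T \<longleftrightarrow>
     (\<forall>x\<in>X. zd_convergent X d (\<lambda>n. (T ^^ n) x) \<and>
        (\<forall>z\<in>X. zd_converges d (\<lambda>n. (T ^^ n) x) z \<longrightarrow> z \<in> Fix_d X T d))
     \<and> d_singleton d (Fix_d X T d)"

definition M1 :: "('a \<Rightarrow> 'a \<Rightarrow> real) \<Rightarrow> 'a \<Rightarrow> 'a \<Rightarrow> real" where
  "M1 d x y = d x y"

definition Hfun :: "('a \<Rightarrow> 'a \<Rightarrow> real) \<Rightarrow> ('a \<Rightarrow> 'a) \<Rightarrow> 'a \<Rightarrow> 'a \<Rightarrow> real" where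
  "Hfun d T x y = max (d x (T x)) (d y (T y))"

definition M2 :: "('a \<Rightarrow> 'a \<Rightarrow> real) \<Rightarrow> ('a \<Rightarrow> 'a) \<Rightarrow> 'a \<Rightarrow> 'a \<Rightarrow> real" where
  "M2 d T x y = max (M1 d x y) (Hfun d T x y)"

definition normal_fun :: "(real \<Rightarrow> real) \<Rightarrow> bool" where
  "normal_fun \<phi> \<longleftrightarrow> \<phi> 0 = 0 \<and> (\<forall>t>0. \<phi> t < t)"

definition asymptotic_normal :: "(real \<Rightarrow> real) \<Rightarrow> bool" where
  "asymptotic_normal \<phi> \<longleftrightarrow> normal_fun \<phi> \<and>
     (\<forall>r::nat \<Rightarrow> real. (\<forall>n. r n \<ge> 0) \<longrightarrow> (\<forall>n. r (Suc n) \<le> \<phi> (r n)) \<longrightarrow> r \<longlonglongrightarrow> 0)"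

definition nearly_right_admissible :: "(real \<Rightarrow> real) \<Rightarrow> bool" where
  "nearly_right_admissible \<phi> \<longleftrightarrow> normal_fun \<phi> \<and>
     (\<exists>Q. countable Q \<and> Q \<subseteq> {0<..} \<and>
        (\<forall>s. s > 0 \<longrightarrow> s \<notin> Q \<longrightarrow>
           max (Limsup (at_right s) (\<lambda>t. ereal (\<phi> t))) (ereal (\<phi> s)) < ereal s))"

end

theory Submission
  imports Defs
begin

lemma admissible_point:
  assumes "nearly_right_admissible \<phi>" and "e > 0"
  shows "\<exists>s c b. 0 < s \<and> s \<le> e \<and> c < s \<and> b > s \<and> (\<forall>t. s \<le> t \<and> t < b \<longrightarrow> \<phi> t \<le> c)"
proof -
  obtain Q where Q: "countable Q" "\<forall>s. s > 0 \<longrightarrow> s \<notin> Q \<longrightarrow>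
           max (Limsup (at_right s) (\<lambda>t. ereal (\<phi> t))) (ereal (\<phi> s)) < ereal s"
    using assms(1) unfolding nearly_right_admissible_def by blast
  have "uncountable {0<..<e}" using assms(2) uncountable_open_interval by blast
  hence "{0<..<e} - Q \<noteq> {}" using Q(1) countable_subset by (metis Diff_eq_empty_iff)
  then obtain s where "s \<in> {0<..<e} - Q" by blast
  hence s: "0 < s" "s < e" "s \<notin> Q" by auto
  have m: "max (Limsup (at_right s) (\<lambda>t. ereal (\<phi> t))) (ereal (\<phi> s)) < ereal s"
    using Q(2) s by blast
  hence l: "Limsup (at_right s) (\<lambda>t. ereal (\<phi> t)) < ereal s" and p: "\<phi> s < s" by auto
  obtain c0 where c0: "Limsup (at_right s) (\<lambda>t. ereal (\<phi> t)) < ereal c0" "c0 < s"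
  proof (cases "Limsup (at_right s) (\<lambda>t. ereal (\<phi> t))")
    case (real r)
    then show ?thesis using that[of "(r+s)/2"] l by auto
  next
    case PInf then show ?thesis using l by auto
  next
    case MInf then show ?thesis using that[of "s - 1"] by auto
  qed
  have "eventually (\<lambda>t. ereal (\<phi> t) < ereal c0) (at_right s)"
    using Limsup_lessD[OF c0(1)] .
  then obtain b where b: "b > s" "\<forall>y>s. y < b \<longrightarrow> \<phi> y < c0"
    unfolding eventually_at_right_field by auto
  show ?thesis
    apply (rule exI[of _ s], rule exI[of _ "max c0 (\<phi> s)"], rule exI[of _ b])
    using s p b c0 by (auto simp: order_le_less)
qed

theorem theorem4:
  fixes X :: "'a set" and d :: "'a \<Rightarrow> 'a \<Rightarrow> real" and T :: "'a \<Rightarrow> 'a"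
    and G :: "'a \<Rightarrow> 'a \<Rightarrow> real" and \<phi> :: "real \<Rightarrow> real"
  assumes "X \<noteq> {}"
    and "symmetric_on X d" and "triangular_on X d"
    and "zero_complete X d"
    and "T ` X \<subseteq> X"
    and "G = M1 d \<or> G = M2 d T"
    and "\<forall>t\<ge>0. \<phi> t \<ge> 0"
    and "nearly_right_admissible \<phi>" and "asymptotic_normal \<phi>"
    and "\<forall>x\<in>X. \<forall>y\<in>X. d (T x) (T y) \<le> \<phi> (G x y)"
  shows "global_Picard X d T"
proof -
  note sym = assms(2)[unfolded symmetric_on_def]
  have tri: "\<And>p q r. p\<in>X \<Longrightarrow> q\<in>X \<Longrightarrow> r\<in>X \<Longrightarrow> d p r \<le> d p q + d q r"
    using assms(3) unfolding triangular_on_def by blast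
  have TX: "\<And>x. x \<in> X \<Longrightarrow> T x \<in> X" using assms(5) by auto
  have phin: "\<phi> 0 = 0" "\<And>t. t > 0 \<Longrightarrow> \<phi> t < t"
    using assms(9) unfolding asymptotic_normal_def normal_fun_def by auto
  have phile: "\<And>t. t \<ge> 0 \<Longrightarrow> \<phi> t \<le> t" using phin by (metis less_eq_real_def)
  have phi0: "\<And>t. t \<ge> 0 \<Longrightarrow> \<phi> t \<ge> 0" using assms(7) by auto
  have dge: "\<And>p q. p\<in>X \<Longrightarrow> q\<in>X \<Longrightarrow> 0 \<le> d p q" using sym by auto
  have dsym: "\<And>p q. p\<in>X \<Longrightarrow> q\<in>X \<Longrightarrow> d p q = d q p" using sym by auto
  have Gge: "\<And>p q. p\<in>X \<Longrightarrow> q\<in>X \<Longrightarrow> d p q \<le> G p q"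
    using assms(6) by (auto simp: M1_def M2_def)
  have Gle: "\<And>p q. p\<in>X \<Longrightarrow> q\<in>X \<Longrightarrow> G p q \<le> max (d p q) (max (d p (T p)) (d q (T q)))"
    using assms(6) by (auto simp: M1_def M2_def Hfun_def)
  have Geq: "\<And>p q. p\<in>X \<Longrightarrow> q\<in>X \<Longrightarrow> d p (T p) \<le> d p q \<Longrightarrow> d q (T q) \<le> d p q \<Longrightarrow> G p q = d p q"
    using Gge Gle by (smt (verit))
  have contr: "\<And>p q. p\<in>X \<Longrightarrow> q\<in>X \<Longrightarrow> d (T p) (T q) \<le> \<phi> (G p q)" using assms(10) by auto
  have xX: "\<And>x0 n. x0 \<in> X \<Longrightarrow> (T^^n) x0 \<in> X"
  proof -
    fix x0 n assume "x0 \<in> X" then show "(T^^n) x0 \<in> X" by (induction n) (auto intro: TX)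
  qed
  have step: "(\<lambda>n. d ((T^^n) x0) ((T^^Suc n) x0)) \<longlonglongrightarrow> 0" if x0: "x0 \<in> X" for x0
  proof -
    define x where "x = (\<lambda>n. (T^^n) x0)"
    define a where "a = (\<lambda>n. d (x n) (x (Suc n)))"
    have X': "\<And>n. x n \<in> X" using xX x0 by (simp add: x_def)
    have xS: "\<And>n. x (Suc n) = T (x n)" by (simp add: x_def)
    have a0: "\<And>n. a n \<ge> 0" using dge X' by (simp add: a_def)
    have arec: "a (Suc n) \<le> \<phi> (a n)" for n
    proof -
      have c: "a (Suc n) \<le> \<phi> (G (x n) (x (Suc n)))"
        using contr[OF X'[of n] X'[of "Suc n"]] by (simp add: a_def xS[symmetric])
      show ?thesis
      proof (cases "G = M1 d")
        case True then show ?thesis using c by (simp add: M1_def a_def)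
      next
        case False
        hence G2: "G = M2 d T" using assms(6) by auto
        have Gv: "G (x n) (x (Suc n)) = max (a n) (max (a n) (a (Suc n)))"
          by (simp add: G2 M2_def M1_def Hfun_def a_def xS[symmetric])
        show ?thesis
        proof (cases "a (Suc n) \<le> a n")
          case True then show ?thesis using c Gv by simp
        next
          case False
          then have "a (Suc n) \<le> \<phi> (a (Suc n))" using c Gv by simp
          moreover have "a (Suc n) > 0" using False a0[of n] by simp
          ultimately show ?thesis using phin(2)[of "a (Suc n)"] by simp
        qed
      qed
    qed
    have "a \<longlonglongrightarrow> 0" using assms(9) a0 arec unfolding asymptotic_normal_def by blast
    then show ?thesis by (simp add: a_def x_def)
  qed
  have fixp: "d z (T z) = 0" if x0: "x0 \<in> X" and z: "z \<in> X"
    and conv: "zd_converges d (\<lambda>n. (T^^n) x0) z" for x0 z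
  proof (rule ccontr)
    define x where "x = (\<lambda>n. (T^^n) x0)"
    define a where "a = (\<lambda>n. d (x n) (x (Suc n)))"
    define r where "r = d z (T z)"
    assume "d z (T z) \<noteq> 0"
    hence r0: "r > 0" using dge[OF z TX[OF z]] by (simp add: r_def)
    have X': "\<And>n. x n \<in> X" using xX x0 by (simp add: x_def)
    have xS: "\<And>n. x (Suc n) = T (x n)" by (simp add: x_def)
    define h where "h = (r - \<phi> r) / 2"
    have h0: "h > 0" using phin(2)[OF r0] by (simp add: h_def)
    have L1: "(\<lambda>n. d (x n) z) \<longlonglongrightarrow> 0" using conv by (simp add: zd_converges_def x_def)
    have L2: "(\<lambda>n. d (x (Suc n)) z) \<longlonglongrightarrow> 0" using LIMSEQ_Suc[OF L1] .
    have L3: "a \<longlonglongrightarrow> 0" using step[OF x0] by (simp add: a_def x_def)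
    have "eventually (\<lambda>n. d (x n) z < h \<and> d (x (Suc n)) z < h \<and> a n < r) sequentially"
      using order_tendstoD(2)[OF L1 h0] order_tendstoD(2)[OF L2 h0] order_tendstoD(2)[OF L3 r0]
      by eventually_elim auto
    then obtain n where n: "d (x n) z < h" "d (x (Suc n)) z < h" "a n < r"
      unfolding eventually_sequentially by auto
    have t1: "r \<le> d z (x (Suc n)) + d (x (Suc n)) (T z)"
      using tri[OF z X'[of "Suc n"] TX[OF z]] by (simp add: r_def)
    have t2: "d (x (Suc n)) (T z) \<le> \<phi> (G (x n) z)"
      using contr[OF X'[of n] z] by (simp add: xS)
    have dz: "d z (x (Suc n)) = d (x (Suc n)) z" using dsym z X' by blast
    show False
    proof (cases "G = M1 d")
      case True
      have "\<phi> (G (x n) z) \<le> d (x n) z"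
        using phile[OF dge[OF X'[of n] z]] by (simp add: True M1_def)
      then show False using t1 t2 dz n phi0[of r] r0 by (simp add: h_def)
    next
      case False
      hence G2: "G = M2 d T" using assms(6) by auto
      have "G (x n) z = r"
        using n h0 phi0[of r] r0 phin(2)[OF r0]
        by (simp add: G2 M2_def M1_def Hfun_def r_def a_def xS[symmetric] h_def)
      then show False using t1 t2 dz n h0 by (simp add: h_def)
    qed
  qed
  have orbit: "\<exists>z\<in>X. zd_converges d (\<lambda>n. (T^^n) x0) z" if x0: "x0 \<in> X" for x0
  proof -
    define x where "x = (\<lambda>n. (T^^n) x0)"
    define a where "a = (\<lambda>n. d (x n) (x (Suc n)))"
    have X': "\<And>n. x n \<in> X" using xX x0 by (simp add: x_def)
    have xS: "\<And>n. x (Suc n) = T (x n)" by (simp add: x_def)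
    have L3: "a \<longlonglongrightarrow> 0" using step[OF x0] by (simp add: a_def x_def)
    have "zd_Cauchy d x"
      unfolding zd_Cauchy_def
    proof (rule ccontr)
      assume "\<not> (\<forall>e>0. \<exists>j. \<forall>m n. j \<le> m \<and> m < n \<longrightarrow> d (x m) (x n) < e)"
      then obtain e where e: "e > 0" "\<forall>j. \<exists>m n. j \<le> m \<and> m < n \<and> \<not> d (x m) (x n) < e"
        by blast
      obtain s c b where scb: "0 < s" "s \<le> e" "c < s" "b > s"
        "\<forall>t. s \<le> t \<and> t < b \<longrightarrow> \<phi> t \<le> c"
        using admissible_point[OF assms(8) e(1)] by blast
      define \<eta> where "\<eta> = min (min s (b - s)) ((s - c) / 2)"
      have \<eta>0: "\<eta> > 0" using scb by (simp add: \<eta>_def)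
      obtain N where N: "\<And>n. n \<ge> N \<Longrightarrow> a n < \<eta>"
        using order_tendstoD(2)[OF L3 \<eta>0] unfolding eventually_sequentially by auto
      obtain m n where mn: "N \<le> m" "m < n" "\<not> d (x m) (x n) < e" using e(2) by blast
      define P where "P = (\<lambda>k. m < k \<and> s \<le> d (x m) (x k))"
      have Pn: "P n" using mn scb by (simp add: P_def)
      define n0 where "n0 = (LEAST k. P k)"
      have Pn0: "P n0" using LeastI[of P, OF Pn] by (simp add: n0_def)
      have nP: "\<And>k. k < n0 \<Longrightarrow> \<not> P k" using not_less_Least n0_def by blast
      have am: "a m < \<eta>" using N mn by simp
      have "n0 \<noteq> Suc m" using Pn0 am by (auto simp: P_def a_def \<eta>_def)
      then obtain k where k: "n0 = Suc k" "m < k" using Pn0 unfolding P_def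
        by (metis Suc_lessE Suc_lessI)
      have dk: "d (x m) (x k) < s" using nP[of k] k by (auto simp: P_def)
      have ak: "a k < \<eta>" using N k mn by simp
      have an0: "a n0 < \<eta>" using N k mn by simp
      define D where "D = d (x m) (x n0)"
      have Ds: "s \<le> D" using Pn0 by (simp add: P_def D_def)
      have "D \<le> d (x m) (x k) + a k" using tri[OF X'[of m] X'[of k] X'[of n0]]
        by (simp add: D_def a_def k)
      hence Db: "D < b" using dk ak by (simp add: \<eta>_def)
      have "G (x m) (x n0) = D"
        using Geq[OF X'[of m] X'[of n0]] am an0 Ds by (simp add: xS[symmetric] a_def D_def \<eta>_def)
      hence c1: "d (x (Suc m)) (x (Suc n0)) \<le> c"
        using contr[OF X'[of m] X'[of n0]] scb(5) Ds Db by (simp add: xS) (smt (verit))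
      have "D \<le> a m + d (x (Suc m)) (x n0)" using tri[OF X'[of m] X'[of "Suc m"] X'[of n0]]
        by (simp add: D_def a_def)
      also have "d (x (Suc m)) (x n0) \<le> d (x (Suc m)) (x (Suc n0)) + a n0"
        using tri[OF X'[of "Suc m"] X'[of "Suc n0"] X'[of n0]] dsym[OF X'[of n0] X'[of "Suc n0"]]
        by (simp add: a_def)
      finally have "D \<le> a m + c + a n0" using c1 by simp
      then show False using am an0 Ds by (simp add: \<eta>_def)
    qed
    then have "zd_convergent X d x" using assms(4) X' unfolding zero_complete_def by blast
    then show ?thesis by (simp add: zd_convergent_def x_def)
  qed
  obtain x0 where x0: "x0 \<in> X" using assms(1) by auto
  obtain z0 where z0: "z0 \<in> X" "zd_converges d (\<lambda>n. (T^^n) x0) z0" using orbit[OF x0] by blast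
  have fne: "Fix_d X T d \<noteq> {}" using fixp[OF x0 z0(1) z0(2)] z0(1) by (auto simp: Fix_d_def)
  have uniq: "d u v = 0" if u: "u \<in> Fix_d X T d" and v: "v \<in> Fix_d X T d" for u v
  proof -
    have uX: "u \<in> X" "d u (T u) = 0" and vX: "v \<in> X" "d v (T v) = 0"
      using u v by (auto simp: Fix_d_def)
    have "d u v \<le> d u (T u) + d (T u) v" using tri[OF uX(1) TX[OF uX(1)] vX(1)] .
    also have "d (T u) v \<le> d (T u) (T v) + d (T v) v" using tri[OF TX[OF uX(1)] TX[OF vX(1)] vX(1)] by simp
    also have "d (T v) v = 0" using dsym vX TX by metis
    finally have 1: "d u v \<le> d (T u) (T v)" using uX by simp
    have "G u v = d u v" using Geq[OF uX(1) vX(1)] uX vX dge by simp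
    hence "d u v \<le> \<phi> (d u v)" using 1 contr[OF uX(1) vX(1)] by simp
    then show ?thesis using phin(2)[of "d u v"] dge[OF uX(1) vX(1)] by (cases "d u v > 0") auto
  qed
  show ?thesis
    unfolding global_Picard_def d_singleton_def
  proof (intro conjI ballI allI impI)
    fix x assume x: "x \<in> X"
    show "zd_convergent X d (\<lambda>n. (T ^^ n) x)" using orbit[OF x] by (simp add: zd_convergent_def)
  next
    fix x z assume "x \<in> X" "z \<in> X" "zd_converges d (\<lambda>n. (T ^^ n) x) z"
    then show "z \<in> Fix_d X T d" using fixp[of x z] by (simp add: Fix_d_def)
  next
    show "Fix_d X T d \<noteq> {}" by (rule fne)
  next
    fix u v assume "u \<in> Fix_d X T d" "v \<in> Fix_d X T d"
    then show "d u v = 0" by (rule uniq)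
  qed
qed

end
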